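(* Let $V$ be a toroidal vertex algebra and let $(W,Y_W)$ be a $V$-module. Then for every $v\in V$ and $(m_0,\mathbf{m})\in\mathbb{Z}\times\mathbb{Z}^r$, $$Y_W(v_{m_0,\mathbf{m}}\mathbf{1};x_0,\mathbf{x})\in \mathbf{x}^{-\mathbf{m}}\,\mathcal{E}(W),$$ and $$Y_W(v;x_0,\mathbf{x})=\sum_{\mathbf{m}\in\mathbb{Z}^r}Y_W(v_{-1,\mathbf{m}}\mathbf{1};x_0,\mathbf{x}).$$ For $u\in V^0$ set $Y_W^0(u,x_0)=Y_W(u;x_0,\mathbf{x})|_{\mathbf{x}=1}\in\mathcal{E}(W)$. Then $(W,Y_W^0)$ is a module for $V^0$ viewed as a vertex algebra (with vertex operator map $Y^0$). Furthermore, if $(W,Y_W)$ is an irreducible $V$-module, then $(W,Y_W^0)$ is an irreducible module for the vertex algebra $V^0$.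
   Context: Fix a positive integer $r$. Write $\mathbf{x}=(x_1,\dots,x_r)$ and $\mathbf{x}^{\mathbf{m}}=x_1^{m_1}\cdots x_r^{m_r}$ for $\mathbf{m}\in\mathbb{Z}^r$ (similarly for other variables), and $\mathbf{z}\mathbf{y}=(z_1y_1,\dots,z_ry_r)$. For a vector space $W$ put $\mathcal{E}(W,r)=\mathrm{Hom}(W,W[[x_1^{\pm1},\dots,x_r^{\pm1}]]((x_0)))$ and $\mathcal{E}(W)=\mathrm{Hom}(W,W((x_0)))$. A toroidal vertex algebra is a vector space $V$ with a linear map $Y(\cdot;x_0,\mathbf{x}):V\to\mathcal{E}(V,r)$, $v\mapsto\sum_{(m_0,\mathbf{m})\in\mathbb{Z}\times\mathbb{Z}^r}v_{m_0,\mathbf{m}}x_0^{-m_0-1}\mathbf{x}^{-\mathbf{m}}$, and a vector $\mathbf{1}\in V$ such that $Y(\mathbf{1};x_0,\mathbf{x})v=v$ and $Y(v;x_0,\mathbf{x})\mathbf{1}\in V[[x_0,x_1^{\pm1},\dots,x_r^{\pm1}]]$ for all $v\in V$, and for all $u,v\in V$ $$z_0^{-1}\delta\!\left(\tfrac{x_0-y_0}{z_0}\right)Y(u;x_0,\mathbf{z}\mathbf{y})Y(v;y_0,\mathbf{y})-z_0^{-1}\delta\!\left(\tfrac{y_0-x_0}{-z_0}\right)Y(v;y_0,\mathbf{y})Y(u;x_0,\mathbf{z}\mathbf{y})=y_0^{-1}\delta\!\left(\tfrac{x_0-z_0}{y_0}\right)Y(Y(u;z_0,\mathbf{z})v;y_0,\mathbf{y}),$$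 where $Y(u;x_0,\mathbf{z}\mathbf{y})=\sum u_{m_0,\mathbf{m}}x_0^{-m_0-1}\mathbf{z}^{-\mathbf{m}}\mathbf{y}^{-\mathbf{m}}$. A $V$-module is a vector space $W$ with a linear map $Y_W(\cdot;x_0,\mathbf{x}):V\to\mathcal{E}(W,r)$ with $Y_W(\mathbf{1};x_0,\mathbf{x})=1_W$ satisfying the same Jacobi identity with $Y$ replaced by $Y_W$ in the three outer operator places (the inner $Y(u;z_0,\mathbf{z})v$ remaining the algebra's). For a toroidal vertex algebra $V$, $V^0=\mathrm{span}\{v_{m_0,\mathbf{m}}\mathbf{1}\mid v\in V,(m_0,\mathbf{m})\in\mathbb{Z}\times\mathbb{Z}^r\}$; it is a toroidal vertex subalgebra, $Y(v;x_0,\mathbf{x})\in\mathcal{E}(V)[x_1^{\pm1},\dots,x_r^{\pm1}]$ for $v\in V^0$, and with $Y^0(v,x_0)=Y(v;x_0,\mathbf{x})|_{\mathbf{x}=1}$ the triple $(V^0,Y^0,\mathbf{1})$ is a vertex algebra. *)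

theory Defs
  imports Complex_Main "HOL-Analysis.Finite_Cartesian_Product"
begin

text \<open>
A vector space is a type of class
ab_group_add together with a scalar multiplication s such that vector_space s holds.
Z^r is the type int ^ 'r for a finite (hence nonempty) index type 'r, so r = CARD('r) \<ge> 1.

A formal operator series  Y(u;x0,x) = sum u_{m0,m} x0^(-m0-1) x^(-m)  is represented by its
coefficient function:  Y u m0 m w  is  u_{m0,m} w.  For ordinary vertex operators
Y(u,x0) = sum u_{m0} x0^(-m0-1) we write  Y u m0 w  for  u_{m0} w.
\<close>

text \<open>Finite-support sum: the sum of the (finitely many) nonzero values of f.
 This is the coefficientwise value of a formal sum whose family is locally finite.\<close>
definition fsum :: "('i \<Rightarrow> 'a::comm_monoid_add) \<Rightarrow> 'a" where
  "fsum f = sum f {k. f k \<noteq> 0}"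

text \<open>Coefficients of the three terms of the Jacobi identity (toroidal case).
 Coefficient of  z0^(-n-1) x0^(-p-1) y0^(-q-1) z^(-a) y^(-c)  applied to w, where
 z0^(-1) delta((x0-y0)/z0) = sum_n z0^(-n-1) (x0-y0)^n  with (x0-y0)^n expanded in
 nonnegative powers of y0, etc.  Here YW is the outer operator map and Y the inner one.\<close>

definition tjac1 ::
  "(complex \<Rightarrow> 'w::ab_group_add \<Rightarrow> 'w) \<Rightarrow> ('v \<Rightarrow> int \<Rightarrow> int^'r \<Rightarrow> 'w \<Rightarrow> 'w)
   \<Rightarrow> 'v \<Rightarrow> 'v \<Rightarrow> int \<Rightarrow> int \<Rightarrow> int \<Rightarrow> int^'r \<Rightarrow> int^'r \<Rightarrow> 'w \<Rightarrow> 'w" where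
  "tjac1 sW YW u v n p q a c w =
     fsum (\<lambda>k::nat. sW ((-1) ^ k * (of_int n gchoose k))
                        (YW u (n + p - int k) a (YW v (q + int k) (c - a) w)))"

definition tjac2 ::
  "(complex \<Rightarrow> 'w::ab_group_add \<Rightarrow> 'w) \<Rightarrow> ('v \<Rightarrow> int \<Rightarrow> int^'r \<Rightarrow> 'w \<Rightarrow> 'w)
   \<Rightarrow> 'v \<Rightarrow> 'v \<Rightarrow> int \<Rightarrow> int \<Rightarrow> int \<Rightarrow> int^'r \<Rightarrow> int^'r \<Rightarrow> 'w \<Rightarrow> 'w" where
  "tjac2 sW YW u v n p q a c w =
     fsum (\<lambda>k::nat. sW ((-1) powi n * (-1) ^ k * (of_int n gchoose k))
                        (YW v (n + q - int k) (c - a) (YW u (p + int k) a w)))"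

definition tjac3 ::
  "(complex \<Rightarrow> 'w::ab_group_add \<Rightarrow> 'w) \<Rightarrow> ('v \<Rightarrow> int \<Rightarrow> int^'r \<Rightarrow> 'w \<Rightarrow> 'w)
   \<Rightarrow> ('v \<Rightarrow> int \<Rightarrow> int^'r \<Rightarrow> 'v \<Rightarrow> 'v)
   \<Rightarrow> 'v \<Rightarrow> 'v \<Rightarrow> int \<Rightarrow> int \<Rightarrow> int \<Rightarrow> int^'r \<Rightarrow> int^'r \<Rightarrow> 'w \<Rightarrow> 'w" where
  "tjac3 sW YW Y u v n p q a c w =
     fsum (\<lambda>k::nat. sW ((-1) ^ k * (of_int (int k - p - 1) gchoose k))
                        (YW (Y u (n + int k) a v) (p + q - int k) c w))"

definition toroidal_jacobi where
  "toroidal_jacobi sW YW Y \<longleftrightarrow>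
     (\<forall>u v n p q a c w. tjac1 sW YW u v n p q a c w - tjac2 sW YW u v n p q a c w
                          = tjac3 sW YW Y u v n p q a c w)"

definition toroidal_va ::
  "(complex \<Rightarrow> 'v::ab_group_add \<Rightarrow> 'v) \<Rightarrow> ('v \<Rightarrow> int \<Rightarrow> int^'r \<Rightarrow> 'v \<Rightarrow> 'v) \<Rightarrow> 'v \<Rightarrow> bool" where
  "toroidal_va sV Y one \<longleftrightarrow>
     vector_space sV \<and>
     (\<forall>m0 m w. Vector_Spaces.linear sV sV (\<lambda>u. Y u m0 m w)) \<and>
     (\<forall>u m0 m. Vector_Spaces.linear sV sV (Y u m0 m)) \<and>
     (\<forall>u w. \<exists>N. \<forall>m0\<ge>N. \<forall>m. Y u m0 m w = 0) \<and>
     (\<forall>m0 m v. Y one m0 m v = (if m0 = -1 \<and> m = 0 then v else 0)) \<and>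
     (\<forall>v m0 m. m0 \<ge> 0 \<longrightarrow> Y v m0 m one = 0) \<and>
     toroidal_jacobi sV Y Y"

definition toroidal_module ::
  "(complex \<Rightarrow> 'v::ab_group_add \<Rightarrow> 'v) \<Rightarrow> ('v \<Rightarrow> int \<Rightarrow> int^'r \<Rightarrow> 'v \<Rightarrow> 'v) \<Rightarrow> 'v
   \<Rightarrow> (complex \<Rightarrow> 'w::ab_group_add \<Rightarrow> 'w) \<Rightarrow> ('v \<Rightarrow> int \<Rightarrow> int^'r \<Rightarrow> 'w \<Rightarrow> 'w) \<Rightarrow> bool" where
  "toroidal_module sV Y one sW YW \<longleftrightarrow>
     vector_space sW \<and>
     (\<forall>m0 m w. Vector_Spaces.linear sV sW (\<lambda>u. YW u m0 m w)) \<and>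
     (\<forall>u m0 m. Vector_Spaces.linear sW sW (YW u m0 m)) \<and>
     (\<forall>u w. \<exists>N. \<forall>m0\<ge>N. \<forall>m. YW u m0 m w = 0) \<and>
     (\<forall>m0 m w. YW one m0 m w = (if m0 = -1 \<and> m = 0 then w else 0)) \<and>
     toroidal_jacobi sW YW Y"

definition toroidal_irreducible ::
  "(complex \<Rightarrow> 'w::ab_group_add \<Rightarrow> 'w) \<Rightarrow> ('v \<Rightarrow> int \<Rightarrow> int^'r \<Rightarrow> 'w \<Rightarrow> 'w) \<Rightarrow> bool" where
  "toroidal_irreducible sW YW \<longleftrightarrow>
     (\<exists>w::'w. w \<noteq> 0) \<and>
     (\<forall>U. module.subspace sW U \<and> (\<forall>u m0 m. YW u m0 m ` U \<subseteq> U) \<longrightarrow> U = {0} \<or> U = UNIV)"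

definition V0 ::
  "(complex \<Rightarrow> 'v::ab_group_add \<Rightarrow> 'v) \<Rightarrow> ('v \<Rightarrow> int \<Rightarrow> int^'r \<Rightarrow> 'v \<Rightarrow> 'v) \<Rightarrow> 'v \<Rightarrow> 'v set" where
  "V0 sV Y one = module.span sV {Y v m0 m one | v m0 m. True}"

definition at_one :: "('v \<Rightarrow> int \<Rightarrow> int^'r \<Rightarrow> 'w \<Rightarrow> 'w::ab_group_add) \<Rightarrow> 'v \<Rightarrow> int \<Rightarrow> 'w \<Rightarrow> 'w" where
  "at_one YW u m0 w = fsum (\<lambda>m. YW u m0 m w)"

text \<open>Jacobi identity for ordinary vertex operators (coefficient of z0^(-n-1) x0^(-p-1) y0^(-q-1)),
 for u, v in the carrier V0.\<close>
definition va_jacobi ::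
  "'v set \<Rightarrow> (complex \<Rightarrow> 'w::ab_group_add \<Rightarrow> 'w) \<Rightarrow> ('v \<Rightarrow> int \<Rightarrow> 'w \<Rightarrow> 'w)
   \<Rightarrow> ('v \<Rightarrow> int \<Rightarrow> 'v \<Rightarrow> 'v) \<Rightarrow> bool" where
  "va_jacobi V sW YW Y \<longleftrightarrow>
     (\<forall>u\<in>V. \<forall>v\<in>V. \<forall>n p q w.
        fsum (\<lambda>k::nat. sW ((-1) ^ k * (of_int n gchoose k))
                          (YW u (n + p - int k) (YW v (q + int k) w)))
      - fsum (\<lambda>k::nat. sW ((-1) powi n * (-1) ^ k * (of_int n gchoose k))
                          (YW v (n + q - int k) (YW u (p + int k) w)))
      = fsum (\<lambda>k::nat. sW ((-1) ^ k * (of_int (int k - p - 1) gchoose k))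
                          (YW (Y u (n + int k) v) (p + q - int k) w)))"

text \<open>Module (W, YW) for a vertex algebra (V, Y, 1) whose underlying space is the subspace V
 (of the type 'v with scalar multiplication sV).\<close>
definition va_module ::
  "(complex \<Rightarrow> 'v::ab_group_add \<Rightarrow> 'v) \<Rightarrow> 'v set \<Rightarrow> ('v \<Rightarrow> int \<Rightarrow> 'v \<Rightarrow> 'v) \<Rightarrow> 'v
   \<Rightarrow> (complex \<Rightarrow> 'w::ab_group_add \<Rightarrow> 'w) \<Rightarrow> ('v \<Rightarrow> int \<Rightarrow> 'w \<Rightarrow> 'w) \<Rightarrow> bool" where
  "va_module sV V Y one sW YW \<longleftrightarrow>
     vector_space sW \<and>
     (\<forall>m0 w. \<forall>u\<in>V. \<forall>v\<in>V. \<forall>a b. YW (sV a u + sV b v) m0 w = sW a (YW u m0 w) + sW b (YW v m0 w)) \<and>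
     (\<forall>u\<in>V. \<forall>m0. Vector_Spaces.linear sW sW (YW u m0)) \<and>
     (\<forall>u\<in>V. \<forall>w. \<exists>N. \<forall>m0\<ge>N. YW u m0 w = 0) \<and>
     (\<forall>m0 w. YW one m0 w = (if m0 = -1 then w else 0)) \<and>
     va_jacobi V sW YW Y"

definition va_irreducible ::
  "'v set \<Rightarrow> (complex \<Rightarrow> 'w::ab_group_add \<Rightarrow> 'w) \<Rightarrow> ('v \<Rightarrow> int \<Rightarrow> 'w \<Rightarrow> 'w) \<Rightarrow> bool" where
  "va_irreducible V sW YW \<longleftrightarrow>
     (\<exists>w::'w. w \<noteq> 0) \<and>
     (\<forall>U. module.subspace sW U \<and> (\<forall>u\<in>V. \<forall>m0. YW u m0 ` U \<subseteq> U) \<longrightarrow> U = {0} \<or> U = UNIV)"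

end

theory Submission imports Defs begin

lemma lin_add: "Vector_Spaces.linear s1 s2 f \<Longrightarrow> f (x + y) = f x + f y"
  by (simp add: Vector_Spaces.linear_iff)
lemma lin_scale: "Vector_Spaces.linear s1 s2 f \<Longrightarrow> f (s1 c x) = s2 c (f x)"
  by (simp add: Vector_Spaces.linear_iff)
lemma lin_zero: "Vector_Spaces.linear s1 s2 f \<Longrightarrow> f 0 = 0"
  using lin_add[of s1 s2 f 0 0] by simp
lemma lin_sum: "Vector_Spaces.linear s1 s2 f \<Longrightarrow> f (sum g A) = (\<Sum>x\<in>A. f (g x))"
proof -
  assume l: "Vector_Spaces.linear s1 s2 f"
  interpret additive f by unfold_locales (rule lin_add[OF l])
  show ?thesis by (rule sum)
qed

lemma lin_iff_vs2: "Vector_Spaces.linear s1 s2 f \<Longrightarrow> vector_space s2"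
  by (simp add: Vector_Spaces.linear_iff)
lemma vs_zero: "vector_space s \<Longrightarrow> s c 0 = 0"
proof - assume "vector_space s" then interpret vector_space s . show ?thesis by simp qed
lemma vs_one: "vector_space s \<Longrightarrow> s 1 x = x"
proof - assume "vector_space s" then interpret vector_space s . show ?thesis by simp qed
lemma vs_sum: "vector_space s \<Longrightarrow> s c (sum f A) = (\<Sum>x\<in>A. s c (f x))"
proof - assume "vector_space s" then interpret vector_space s . show ?thesis by (rule scale_sum_right) qed
lemma vs_add: "vector_space s \<Longrightarrow> s c (x + y) = s c x + s c y"
proof - assume "vector_space s" then interpret vector_space s . show ?thesis by (rule scale_right_distrib) qed

lemma fsum_eq_sum: "finite A \<Longrightarrow> (\<And>k. k \<notin> A \<Longrightarrow> f k = 0) \<Longrightarrow> fsum f = sum f A"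
  unfolding fsum_def by (rule sum.mono_neutral_left) auto

lemma fsum_zero[simp]: "fsum (\<lambda>k. 0) = 0"
  unfolding fsum_def by simp

lemma fsum_single: "(\<And>k. k \<noteq> a \<Longrightarrow> f k = 0) \<Longrightarrow> fsum f = f a"
  using fsum_eq_sum[of "{a}" f] by auto

lemma fsum_sum:
  assumes "finite A" "finite K" "\<And>a k. a \<in> A \<Longrightarrow> k \<notin> K \<Longrightarrow> f a k = 0"
  shows "fsum (\<lambda>k. \<Sum>a\<in>A. f a k) = (\<Sum>a\<in>A. fsum (f a))"
proof -
  have "fsum (\<lambda>k. \<Sum>a\<in>A. f a k) = (\<Sum>k\<in>K. \<Sum>a\<in>A. f a k)"
    by (rule fsum_eq_sum) (use assms in auto)
  also have "\<dots> = (\<Sum>a\<in>A. \<Sum>k\<in>K. f a k)" by (rule sum.swap)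
  also have "\<dots> = (\<Sum>a\<in>A. fsum (f a))"
    by (rule sum.cong[OF refl], rule fsum_eq_sum[symmetric]) (use assms in auto)
  finally show ?thesis .
qed

lemma supp_lemma:
  fixes Y :: "'v::ab_group_add \<Rightarrow> int \<Rightarrow> int^'r::finite \<Rightarrow> 'v \<Rightarrow> 'v"
    and YW :: "'v \<Rightarrow> int \<Rightarrow> int^'r \<Rightarrow> 'w::ab_group_add \<Rightarrow> 'w"
  assumes vs: "vector_space sW"
    and lin1: "\<forall>m0 m w. Vector_Spaces.linear sV sW (\<lambda>u. YW u m0 m w)"
    and lin2: "\<forall>u m0 m. Vector_Spaces.linear sW sW (YW u m0 m)"
    and jac: "toroidal_jacobi sW YW Y"
    and trunc: "\<forall>m0\<ge>N0. \<forall>m. Y u m0 m v = 0"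
    and suppv: "\<And>Q b w. b \<notin> S \<Longrightarrow> YW v Q b w = 0"
    and ca: "c - a \<notin> S"
  shows "YW (Y u N a v) P c w = 0"
proof -
  have zW: "YW 0 m0 m w' = 0" for m0 m w'
    using lin_zero[OF lin1[rule_format]] by blast
  have zW2: "YW x m0 m 0 = 0" for x m0 m
    using lin_zero[OF lin2[rule_format]] by blast
  have "\<forall>P w. YW (Y u N a v) P c w = 0"
  proof (induction "nat (N0 - N)" arbitrary: N rule: less_induct)
    case less
    show ?case
    proof (cases "N \<ge> N0")
      case True
      then show ?thesis using trunc zW by simp
    next
      case False
      show ?thesis
      proof (intro allI)
        fix P w
        have J: "tjac1 sW YW u v N P 0 a c w - tjac2 sW YW u v N P 0 a c w
                 = tjac3 sW YW Y u v N P 0 a c w"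
          using jac unfolding toroidal_jacobi_def by blast
        have t1: "tjac1 sW YW u v N P 0 a c w = 0"
          unfolding tjac1_def using suppv[OF ca] zW2 vs_zero[OF vs] by simp
        have t2: "tjac2 sW YW u v N P 0 a c w = 0"
          unfolding tjac2_def using suppv[OF ca] zW2 vs_zero[OF vs] by simp
        have "tjac3 sW YW Y u v N P 0 a c w = YW (Y u N a v) P c w"
          unfolding tjac3_def
        proof (subst fsum_single[of 0])
          fix k :: nat assume "k \<noteq> 0"
          then have "nat (N0 - (N + int k)) < nat (N0 - N)" using False by simp
          then have "YW (Y u (N + int k) a v) (P + 0 - int k) c w = 0"
            using less by blast
          then show "sW ((- 1) ^ k * (of_int (int k - P - 1) gchoose k))
             (YW (Y u (N + int k) a v) (P + 0 - int k) c w) = 0"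
            using vs_zero[OF vs] by simp
        qed (simp add: vs_one[OF vs])
        then show "YW (Y u N a v) P c w = 0" using J t1 t2 by simp
      qed
    qed
  qed
  then show ?thesis by blast
qed

lemma vac_id:
  fixes Y :: "'v::ab_group_add \<Rightarrow> int \<Rightarrow> int^'r::finite \<Rightarrow> 'v \<Rightarrow> 'v"
    and YW :: "'v \<Rightarrow> int \<Rightarrow> int^'r \<Rightarrow> 'w::ab_group_add \<Rightarrow> 'w"
  assumes vs: "vector_space sW"
    and lin1: "\<forall>m0 m w. Vector_Spaces.linear sV sW (\<lambda>u. YW u m0 m w)"
    and lin2: "\<forall>u m0 m. Vector_Spaces.linear sW sW (YW u m0 m)"
    and jac: "toroidal_jacobi sW YW Y"
    and vac: "\<forall>m0 m w. YW one m0 m w = (if m0 = -1 \<and> m = 0 then w else 0)"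
    and cre: "\<forall>v m0 m. m0 \<ge> 0 \<longrightarrow> Y v m0 m one = 0"
  shows "YW v n0 n w = YW (Y v (-1) n one) n0 n w"
proof -
  have zW: "YW 0 m0 m w' = 0" for m0 m w'
    using lin_zero[OF lin1[rule_format]] by blast
  have zW2: "YW x m0 m 0 = 0" for x m0 m
    using lin_zero[OF lin2[rule_format]] by blast
  have J: "tjac1 sW YW v one (-1) (n0+1) (-1) n n w - tjac2 sW YW v one (-1) (n0+1) (-1) n n w
                 = tjac3 sW YW Y v one (-1) (n0+1) (-1) n n w"
    using jac unfolding toroidal_jacobi_def by blast
  have t1: "tjac1 sW YW v one (-1) (n0+1) (-1) n n w = YW v n0 n w"
    unfolding tjac1_def
  proof (subst fsum_single[of 0])
    fix k :: nat assume "k \<noteq> 0"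
    then show "sW ((- 1) ^ k * (of_int (- 1) gchoose k))
        (YW v (- 1 + (n0 + 1) - int k) n (YW one (- 1 + int k) (n - n) w)) = 0"
      using vac zW2 vs_zero[OF vs] by simp
  qed (simp add: vs_one[OF vs] vac)
  have t2: "tjac2 sW YW v one (-1) (n0+1) (-1) n n w = 0"
    unfolding tjac2_def using vac vs_zero[OF vs] by simp
  have t3: "tjac3 sW YW Y v one (-1) (n0+1) (-1) n n w = YW (Y v (-1) n one) n0 n w"
    unfolding tjac3_def
  proof (subst fsum_single[of 0])
    fix k :: nat assume "k \<noteq> 0"
    then show "sW ((- 1) ^ k * (of_int (int k - (n0 + 1) - 1) gchoose k))
        (YW (Y v (- 1 + int k) n one) (n0 + 1 + - 1 - int k) n w) = 0"
      using cre zW vs_zero[OF vs] by simp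
  qed (simp add: vs_one[OF vs])
  show ?thesis using J t1 t2 t3 by simp
qed

lemma span_supp:
  fixes Y :: "'v::ab_group_add \<Rightarrow> int \<Rightarrow> int^'r::finite \<Rightarrow> 'v \<Rightarrow> 'v"
    and YW :: "'v \<Rightarrow> int \<Rightarrow> int^'r \<Rightarrow> 'w::ab_group_add \<Rightarrow> 'w"
  assumes vsV: "vector_space sV"
    and lin1: "\<forall>m0 m w. Vector_Spaces.linear sV sW (\<lambda>u. YW u m0 m w)"
    and P1: "\<forall>v m0 m n0 n w. n \<noteq> m \<longrightarrow> YW (Y v m0 m one) n0 n w = 0"
    and u: "u \<in> V0 sV Y one"
  shows "\<exists>A. finite A \<and> (\<forall>m0 m w. m \<notin> A \<longrightarrow> YW u m0 m w = 0)"
proof -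
  interpret V: vector_space sV by (rule vsV)
  have zW: "YW 0 m0 m w' = 0" for m0 m w'
    using lin_zero[OF lin1[rule_format]] by blast
  from u have "u \<in> V.span {Y v m0 m one | v m0 m. True}" unfolding V0_def .
  then show ?thesis
  proof (induction rule: V.span_induct_alt)
    case base
    then show ?case using zW by (intro exI[of _ "{}"]) auto
  next
    case (step c x y)
    from step.hyps(1) obtain v m0 m where x: "x = Y v m0 m one" by blast
    from step.IH obtain A where A: "finite A" "\<forall>m0 m w. m \<notin> A \<longrightarrow> YW y m0 m w = 0" by blast
    show ?case
    proof (intro exI[of _ "insert m A"] conjI allI impI)
      fix n0 n w assume "n \<notin> insert m A"
      have l: "Vector_Spaces.linear sV sW (\<lambda>u. YW u n0 n w)" using lin1 by blast
      have "YW (sV c x + y) n0 n w = sW c (YW x n0 n w) + YW y n0 n w"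
        using lin_add[OF l] lin_scale[OF l] by simp
      then show "YW (sV c x + y) n0 n w = 0"
        using A P1 x \<open>n \<notin> insert m A\<close> vs_zero[OF lin_iff_vs2[OF l]] by simp
    qed (use A in auto)
  qed
qed

lemma at_one_sum:
  assumes "finite A" "\<forall>m0 m w. m \<notin> A \<longrightarrow> YW u m0 m w = 0"
  shows "at_one YW u m0 w = (\<Sum>m\<in>A. YW u m0 m w)"
  unfolding at_one_def by (rule fsum_eq_sum) (use assms in auto)

lemma jac_sum:
  fixes Y :: "'v::ab_group_add \<Rightarrow> int \<Rightarrow> int^'r::finite \<Rightarrow> 'v \<Rightarrow> 'v"
    and YW :: "'v \<Rightarrow> int \<Rightarrow> int^'r \<Rightarrow> 'w::ab_group_add \<Rightarrow> 'w"
  assumes vs: "vector_space sW"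
    and lin1: "\<forall>m0 m w. Vector_Spaces.linear sV sW (\<lambda>u. YW u m0 m w)"
    and lin2: "\<forall>u m0 m. Vector_Spaces.linear sW sW (YW u m0 m)"
    and jac: "toroidal_jacobi sW YW Y"
    and truncY: "\<forall>u w. \<exists>N. \<forall>m0\<ge>N. \<forall>m. Y u m0 m w = 0"
    and truncW: "\<forall>u w. \<exists>N. \<forall>m0\<ge>N. \<forall>m. YW u m0 m w = 0"
    and A: "finite A" and AW: "\<forall>m0 m w. m \<notin> A \<longrightarrow> YW u m0 m w = 0"
    and AY: "\<forall>m0 m x. m \<notin> A \<longrightarrow> Y u m0 m x = 0"
    and B: "finite B" and BW: "\<forall>m0 m w. m \<notin> B \<longrightarrow> YW v m0 m w = 0"
  shows "fsum (\<lambda>k::nat. sW ((-1) ^ k * (of_int n gchoose k))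
                          (at_one YW u (n + p - int k) (at_one YW v (q + int k) w)))
      - fsum (\<lambda>k::nat. sW ((-1) powi n * (-1) ^ k * (of_int n gchoose k))
                          (at_one YW v (n + q - int k) (at_one YW u (p + int k) w)))
      = fsum (\<lambda>k::nat. sW ((-1) ^ k * (of_int (int k - p - 1) gchoose k))
                          (at_one YW (at_one Y u (n + int k) v) (p + q - int k) w))"
proof -
  have zW: "YW 0 m0 m w' = 0" for m0 m w'
    using lin_zero[OF lin1[rule_format]] by blast
  have zW2: "YW x m0 m 0 = 0" for x m0 m
    using lin_zero[OF lin2[rule_format]] by blast
  have sumW2: "YW x m0 m (sum g S) = (\<Sum>s\<in>S. YW x m0 m (g s))" for x m0 m g S
    using lin_sum[OF lin2[rule_format]] by blast
  have sumW1: "YW (sum g S) m0 m w' = (\<Sum>s\<in>S. YW (g s) m0 m w')" for m0 m w' g S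
  proof -
    have l: "Vector_Spaces.linear sV sW (\<lambda>u. YW u m0 m w')" using lin1 by blast
    show ?thesis using lin_sum[OF l] by simp
  qed
  obtain Nv where Nv: "\<forall>m0\<ge>Nv. \<forall>m. YW v m0 m w = 0" using truncW by blast
  obtain Nu where Nu: "\<forall>m0\<ge>Nu. \<forall>m. YW u m0 m w = 0" using truncW by blast
  obtain NY where NY: "\<forall>m0\<ge>NY. \<forall>m. Y u m0 m v = 0" using truncY by blast
  define K1 where "K1 = {..<nat (Nv - q)}"
  define K2 where "K2 = {..<nat (Nu - p)}"
  define K3 where "K3 = {..<nat (NY - n)}"
  have atu: "at_one YW u m0 x = (\<Sum>a\<in>A. YW u m0 a x)" for m0 x
    by (rule at_one_sum[of A YW u, OF A AW])
  have atv: "at_one YW v m0 x = (\<Sum>b\<in>B. YW v m0 b x)" for m0 x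
    by (rule at_one_sum[of B YW v, OF B BW])
  have atY: "at_one Y u m0 x = (\<Sum>a\<in>A. Y u m0 a x)" for m0 x
    by (rule at_one_sum[of A Y u, OF A AY])
  define g1 where "g1 a b k = sW ((-1) ^ k * (of_int n gchoose k))
                    (YW u (n + p - int k) a (YW v (q + int k) b w))" for a b k
  define g2 where "g2 a b k = sW ((-1) powi n * (-1) ^ k * (of_int n gchoose k))
                    (YW v (n + q - int k) b (YW u (p + int k) a w))" for a b k
  define g3 where "g3 a b k = sW ((-1) ^ k * (of_int (int k - p - 1) gchoose k))
                    (YW (Y u (n + int k) a v) (p + q - int k) (a + b) w)" for a b k
  have g1z: "g1 a b k = 0" if "k \<notin> K1" for a b k
  proof -
    have "q + int k \<ge> Nv" using that unfolding K1_def by auto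
    then show ?thesis unfolding g1_def using Nv zW2 vs_zero[OF vs] by simp
  qed
  have g2z: "g2 a b k = 0" if "k \<notin> K2" for a b k
  proof -
    have "p + int k \<ge> Nu" using that unfolding K2_def by auto
    then show ?thesis unfolding g2_def using Nu zW2 vs_zero[OF vs] by simp
  qed
  have g3z: "g3 a b k = 0" if "k \<notin> K3" for a b k
  proof -
    have "n + int k \<ge> NY" using that unfolding K3_def by auto
    then show ?thesis unfolding g3_def using NY zW vs_zero[OF vs] by simp
  qed
  have fin: "finite K1" "finite K2" "finite K3" unfolding K1_def K2_def K3_def by auto
  have dbl: "fsum (\<lambda>k. \<Sum>a\<in>A. \<Sum>b\<in>B. g a b k) = (\<Sum>a\<in>A. \<Sum>b\<in>B. fsum (g a b))"
    if "finite K" "\<And>a b k. k \<notin> K \<Longrightarrow> g a b k = 0" for g K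
  proof -
    have "fsum (\<lambda>k. \<Sum>a\<in>A. \<Sum>b\<in>B. g a b k) = (\<Sum>a\<in>A. fsum (\<lambda>k. \<Sum>b\<in>B. g a b k))"
      by (rule fsum_sum[OF A that(1)]) (simp add: that(2))
    also have "\<dots> = (\<Sum>a\<in>A. \<Sum>b\<in>B. fsum (g a b))"
      by (rule sum.cong[OF refl], rule fsum_sum[OF B that(1)]) (simp add: that(2))
    finally show ?thesis .
  qed
  have L1: "fsum (\<lambda>k::nat. sW ((-1) ^ k * (of_int n gchoose k))
                          (at_one YW u (n + p - int k) (at_one YW v (q + int k) w)))
          = (\<Sum>a\<in>A. \<Sum>b\<in>B. fsum (g1 a b))"
  proof -
    have "(\<lambda>k::nat. sW ((-1) ^ k * (of_int n gchoose k))
                          (at_one YW u (n + p - int k) (at_one YW v (q + int k) w)))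
         = (\<lambda>k. \<Sum>a\<in>A. \<Sum>b\<in>B. g1 a b k)"
      by (rule ext) (simp add: atu atv sumW2 g1_def vs_sum[OF vs])
    then show ?thesis using dbl[OF fin(1) g1z] by simp
  qed
  have L2: "fsum (\<lambda>k::nat. sW ((-1) powi n * (-1) ^ k * (of_int n gchoose k))
                          (at_one YW v (n + q - int k) (at_one YW u (p + int k) w)))
          = (\<Sum>a\<in>A. \<Sum>b\<in>B. fsum (g2 a b))"
  proof -
    have "(\<lambda>k::nat. sW ((-1) powi n * (-1) ^ k * (of_int n gchoose k))
                          (at_one YW v (n + q - int k) (at_one YW u (p + int k) w)))
         = (\<lambda>k. \<Sum>a\<in>A. \<Sum>b\<in>B. g2 a b k)"
      by (rule ext) (simp add: atu atv sumW2 g2_def vs_sum[OF vs] sum.swap[of _ B])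
    then show ?thesis using dbl[OF fin(2) g2z] by simp
  qed
  define C where "C = (\<lambda>(a, b). a + b) ` (A \<times> B)"
  have Cfin: "finite C" unfolding C_def using A B by simp
  have zsupp: "YW (Y u N a v) P c w' = 0" if "c - a \<notin> B" for N a P c w'
    by (rule supp_lemma[OF vs lin1 lin2 jac NY, of B]) (use BW that in auto)
  have inner: "at_one YW (at_one Y u N v) P w = (\<Sum>a\<in>A. \<Sum>b\<in>B. YW (Y u N a v) P (a + b) w)" for N P
  proof -
    have "at_one YW (at_one Y u N v) P w = (\<Sum>c\<in>C. YW (\<Sum>a\<in>A. Y u N a v) P c w)"
      unfolding atY unfolding at_one_def
    proof (rule fsum_eq_sum[OF Cfin])
      fix c assume c: "c \<notin> C"
      have "YW (Y u N a v) P c w = 0" if "a \<in> A" for a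
      proof (rule zsupp)
        show "c - a \<notin> B"
        proof
          assume "c - a \<in> B"
          then have "(\<lambda>(a, b). a + b) (a, c - a) \<in> C" unfolding C_def using that by blast
          then show False using c by simp
        qed
      qed
      then show "YW (\<Sum>a\<in>A. Y u N a v) P c w = 0" by (simp add: sumW1)
    qed
    also have "\<dots> = (\<Sum>a\<in>A. \<Sum>c\<in>C. YW (Y u N a v) P c w)"
      by (simp add: sumW1 sum.swap[of _ C])
    also have "\<dots> = (\<Sum>a\<in>A. \<Sum>b\<in>B. YW (Y u N a v) P (a + b) w)"
    proof (rule sum.cong[OF refl])
      fix a assume a: "a \<in> A"
      have sub: "(+) a ` B \<subseteq> C" unfolding C_def using a by auto
      have "(\<Sum>c\<in>C. YW (Y u N a v) P c w) = (\<Sum>c\<in>(+) a ` B. YW (Y u N a v) P c w)"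
      proof (rule sum.mono_neutral_right[OF Cfin sub], rule ballI)
        fix c assume "c \<in> C - (+) a ` B"
        then have "c - a \<notin> B" by (metis DiffD2 add_diff_cancel_left' add_diff_eq diff_add_cancel imageI)
        then show "YW (Y u N a v) P c w = 0" by (rule zsupp)
      qed
      also have "\<dots> = (\<Sum>b\<in>B. YW (Y u N a v) P (a + b) w)"
        by (rule sum.reindex_cong[of "(+) a"]) auto
      finally show "(\<Sum>c\<in>C. YW (Y u N a v) P c w) = (\<Sum>b\<in>B. YW (Y u N a v) P (a + b) w)" .
    qed
    finally show ?thesis .
  qed
  have L3: "fsum (\<lambda>k::nat. sW ((-1) ^ k * (of_int (int k - p - 1) gchoose k))
                          (at_one YW (at_one Y u (n + int k) v) (p + q - int k) w))
          = (\<Sum>a\<in>A. \<Sum>b\<in>B. fsum (g3 a b))"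
  proof -
    have "(\<lambda>k::nat. sW ((-1) ^ k * (of_int (int k - p - 1) gchoose k))
                          (at_one YW (at_one Y u (n + int k) v) (p + q - int k) w))
         = (\<lambda>k. \<Sum>a\<in>A. \<Sum>b\<in>B. g3 a b k)"
      by (rule ext) (simp add: inner g3_def vs_sum[OF vs])
    then show ?thesis using dbl[OF fin(3) g3z] by simp
  qed
  have T: "fsum (g1 a b) - fsum (g2 a b) = fsum (g3 a b)" for a b
  proof -
    have "tjac1 sW YW u v n p q a (a + b) w - tjac2 sW YW u v n p q a (a + b) w
          = tjac3 sW YW Y u v n p q a (a + b) w"
      using jac unfolding toroidal_jacobi_def by blast
    then show ?thesis unfolding tjac1_def tjac2_def tjac3_def g1_def g2_def g3_def by simp
  qed
  show ?thesis unfolding L1 L2 L3 by (simp add: T sum_subtractf[symmetric])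
qed

theorem proposition2p6:
  fixes sV :: "complex \<Rightarrow> 'v::ab_group_add \<Rightarrow> 'v"
    and Y :: "'v \<Rightarrow> int \<Rightarrow> int^'r::finite \<Rightarrow> 'v \<Rightarrow> 'v"
    and one :: 'v
    and sW :: "complex \<Rightarrow> 'w::ab_group_add \<Rightarrow> 'w"
    and YW :: "'v \<Rightarrow> int \<Rightarrow> int^'r \<Rightarrow> 'w \<Rightarrow> 'w"
  assumes V: "toroidal_va sV Y one"
    and W: "toroidal_module sV Y one sW YW"
  shows "(\<forall>v m0 m n0 n w. n \<noteq> m \<longrightarrow> YW (Y v m0 m one) n0 n w = 0)
       \<and> (\<forall>v n0 n w. YW v n0 n w = fsum (\<lambda>m. YW (Y v (-1) m one) n0 n w))
       \<and> (\<forall>u\<in>V0 sV Y one. finite {m. \<exists>m0 w. YW u m0 m w \<noteq> 0})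
       \<and> va_module sV (V0 sV Y one) (at_one Y) one sW (at_one YW)
       \<and> (toroidal_irreducible sW YW \<longrightarrow> va_irreducible (V0 sV Y one) sW (at_one YW))"
proof -
  note VV = V[unfolded toroidal_va_def]
  have vsV: "vector_space sV" by (rule VV[THEN conjunct1])
  have linV1: "\<forall>m0 m w. Vector_Spaces.linear sV sV (\<lambda>u. Y u m0 m w)" by (rule VV[THEN conjunct2, THEN conjunct1])
  have linV2: "\<forall>u m0 m. Vector_Spaces.linear sV sV (Y u m0 m)" by (rule VV[THEN conjunct2, THEN conjunct2, THEN conjunct1])
  have truncV: "\<forall>u w. \<exists>N. \<forall>m0\<ge>N. \<forall>m. Y u m0 m w = 0" by (rule VV[THEN conjunct2, THEN conjunct2, THEN conjunct2, THEN conjunct1])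
  have vacV: "\<forall>m0 m v. Y one m0 m v = (if m0 = -1 \<and> m = 0 then v else 0)" by (rule VV[THEN conjunct2, THEN conjunct2, THEN conjunct2, THEN conjunct2, THEN conjunct1])
  have creV: "\<forall>v m0 m. m0 \<ge> 0 \<longrightarrow> Y v m0 m one = 0" by (rule VV[THEN conjunct2, THEN conjunct2, THEN conjunct2, THEN conjunct2, THEN conjunct2, THEN conjunct1])
  have jacV: "toroidal_jacobi sV Y Y" by (rule VV[THEN conjunct2, THEN conjunct2, THEN conjunct2, THEN conjunct2, THEN conjunct2, THEN conjunct2])
  note WV = W[unfolded toroidal_module_def]
  have vsW: "vector_space sW" by (rule WV[THEN conjunct1])
  have lin1: "\<forall>m0 m w. Vector_Spaces.linear sV sW (\<lambda>u. YW u m0 m w)" by (rule WV[THEN conjunct2, THEN conjunct1])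
  have lin2: "\<forall>u m0 m. Vector_Spaces.linear sW sW (YW u m0 m)" by (rule WV[THEN conjunct2, THEN conjunct2, THEN conjunct1])
  have truncW: "\<forall>u w. \<exists>N. \<forall>m0\<ge>N. \<forall>m. YW u m0 m w = 0" by (rule WV[THEN conjunct2, THEN conjunct2, THEN conjunct2, THEN conjunct1])
  have vacW: "\<forall>m0 m w. YW one m0 m w = (if m0 = -1 \<and> m = 0 then w else 0)" by (rule WV[THEN conjunct2, THEN conjunct2, THEN conjunct2, THEN conjunct2, THEN conjunct1])
  have jacW: "toroidal_jacobi sW YW Y" by (rule WV[THEN conjunct2, THEN conjunct2, THEN conjunct2, THEN conjunct2, THEN conjunct2])
  have cre0: "\<forall>m0\<ge>0. \<forall>m. Y v m0 m one = 0" for v using creV by blast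
  have P1W: "\<forall>v m0 m n0 n w. n \<noteq> m \<longrightarrow> YW (Y v m0 m one) n0 n w = 0"
  proof (intro allI impI)
    fix v m0 m n0 n w assume "(n::int^'r) \<noteq> m"
    show "YW (Y v m0 m one) n0 n w = 0"
      by (rule supp_lemma[OF vsW lin1 lin2 jacW cre0, of "{0}"])
         (use vacW \<open>n \<noteq> m\<close> in auto)
  qed
  have P1V: "\<forall>v m0 m n0 n x. n \<noteq> m \<longrightarrow> Y (Y v m0 m one) n0 n x = 0"
  proof (intro allI impI)
    fix v m0 m n0 n x assume "(n::int^'r) \<noteq> m"
    show "Y (Y v m0 m one) n0 n x = 0"
      by (rule supp_lemma[OF vsV linV1 linV2 jacV cre0, of "{0}"])
         (use vacV \<open>n \<noteq> m\<close> in auto)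
  qed
  have VI: "YW v n0 n w = YW (Y v (-1) n one) n0 n w" for v n0 n w
    by (rule vac_id[OF vsW lin1 lin2 jacW vacW creV])
  have P2: "\<forall>v n0 n w. YW v n0 n w = fsum (\<lambda>m. YW (Y v (-1) m one) n0 n w)"
  proof (intro allI)
    fix v n0 n w
    have "fsum (\<lambda>m. YW (Y v (-1) m one) n0 n w) = YW (Y v (-1) n one) n0 n w"
      by (rule fsum_single) (use P1W in auto)
    then show "YW v n0 n w = fsum (\<lambda>m. YW (Y v (-1) m one) n0 n w)" using VI by simp
  qed
  have SW: "\<exists>A. finite A \<and> (\<forall>m0 m w. m \<notin> A \<longrightarrow> YW u m0 m w = 0)" if "u \<in> V0 sV Y one" for u
    by (rule span_supp[OF vsV lin1 P1W that])
  have SV: "\<exists>A. finite A \<and> (\<forall>m0 m x. m \<notin> A \<longrightarrow> Y u m0 m x = 0)" if "u \<in> V0 sV Y one" for u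
    by (rule span_supp[OF vsV linV1 P1V that])
  have SB: "\<exists>A. finite A \<and> (\<forall>m0 m w. m \<notin> A \<longrightarrow> YW u m0 m w = 0)
                \<and> (\<forall>m0 m x. m \<notin> A \<longrightarrow> Y u m0 m x = 0)" if uu: "u \<in> V0 sV Y one" for u
  proof -
    obtain A1 where A1: "finite A1" "\<forall>m0 m w. m \<notin> A1 \<longrightarrow> YW u m0 m w = 0" using SW[OF uu] by blast
    obtain A2 where A2: "finite A2" "\<forall>m0 m x. m \<notin> A2 \<longrightarrow> Y u m0 m x = 0" using SV[OF uu] by blast
    show ?thesis
    proof (intro exI[of _ "A1 \<union> A2"] conjI allI impI)
      show "finite (A1 \<union> A2)" using A1(1) A2(1) by simp
    next
      fix m0 m w assume "m \<notin> A1 \<union> A2"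
      then show "YW u m0 m w = 0" using A1(2) by simp
    next
      fix m0 m x assume "m \<notin> A1 \<union> A2"
      then show "Y u m0 m x = 0" using A2(2) by simp
    qed
  qed
  have P3: "\<forall>u\<in>V0 sV Y one. finite {m. \<exists>m0 w. YW u m0 m w \<noteq> 0}"
  proof
    fix u assume u: "u \<in> V0 sV Y one"
    obtain A where A: "finite A" "\<forall>m0 m w. m \<notin> A \<longrightarrow> YW u m0 m w = 0" using SW[OF u] by blast
    have "{m. \<exists>m0 w. YW u m0 m w \<noteq> 0} \<subseteq> A"
    proof
      fix m assume "m \<in> {m. \<exists>m0 w. YW u m0 m w \<noteq> 0}"
      then obtain m0 w where nz: "YW u m0 m w \<noteq> 0" by blast
      show "m \<in> A"
      proof (rule ccontr)
        assume "m \<notin> A"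
        then have "YW u m0 m w = 0" using A(2) by simp
        then show False using nz by simp
      qed
    qed
    then show "finite {m. \<exists>m0 w. YW u m0 m w \<noteq> 0}" using A(1) by (rule finite_subset)
  qed
  have sumW2: "YW x m0 m (sum g S) = (\<Sum>s\<in>S. YW x m0 m (g s))" for x m0 m g S
  proof -
    have l: "Vector_Spaces.linear sW sW (YW x m0 m)" using lin2 by blast
    show ?thesis using lin_sum[OF l] by simp
  qed
  have addW2: "YW x m0 m (a + b) = YW x m0 m a + YW x m0 m b" for x m0 m a b
  proof -
    have l: "Vector_Spaces.linear sW sW (YW x m0 m)" using lin2 by blast
    show ?thesis using lin_add[OF l] by simp
  qed
  have scW2: "YW x m0 m (sW c a) = sW c (YW x m0 m a)" for x m0 m c a
  proof -
    have l: "Vector_Spaces.linear sW sW (YW x m0 m)" using lin2 by blast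
    show ?thesis using lin_scale[OF l] by simp
  qed
  have addW1: "YW (a + b) m0 m w = YW a m0 m w + YW b m0 m w" for m0 m w a b
  proof -
    have l: "Vector_Spaces.linear sV sW (\<lambda>u. YW u m0 m w)" using lin1 by blast
    show ?thesis using lin_add[OF l] by simp
  qed
  have scW1: "YW (sV c a) m0 m w = sW c (YW a m0 m w)" for m0 m w c a
  proof -
    have l: "Vector_Spaces.linear sV sW (\<lambda>u. YW u m0 m w)" using lin1 by blast
    show ?thesis using lin_scale[OF l] by simp
  qed
  interpret WS: vector_space sW by (rule vsW)
  interpret VS: vector_space sV by (rule vsV)
  have M1: "\<forall>m0 w. \<forall>u\<in>V0 sV Y one. \<forall>v\<in>V0 sV Y one. \<forall>a b.
      at_one YW (sV a u + sV b v) m0 w = sW a (at_one YW u m0 w) + sW b (at_one YW v m0 w)"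
  proof (intro allI ballI)
    fix m0 w u v a b assume u: "u \<in> V0 sV Y one" and v: "v \<in> V0 sV Y one"
    obtain A1 where A1: "finite A1" "\<forall>m0 m w. m \<notin> A1 \<longrightarrow> YW u m0 m w = 0" using SW[OF u] by blast
    obtain A2 where A2: "finite A2" "\<forall>m0 m w. m \<notin> A2 \<longrightarrow> YW v m0 m w = 0" using SW[OF v] by blast
    let ?A = "A1 \<union> A2"
    have fA: "finite ?A" using A1 A2 by simp
    have su: "\<forall>m0 m w. m \<notin> ?A \<longrightarrow> YW u m0 m w = 0" using A1 by blast
    have sv: "\<forall>m0 m w. m \<notin> ?A \<longrightarrow> YW v m0 m w = 0" using A2 by blast
    have suv: "\<forall>m0 m w. m \<notin> ?A \<longrightarrow> YW (sV a u + sV b v) m0 m w = 0"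
      using su sv by (simp add: addW1 scW1)
    show "at_one YW (sV a u + sV b v) m0 w = sW a (at_one YW u m0 w) + sW b (at_one YW v m0 w)"
      unfolding at_one_sum[of ?A YW u, OF fA su] at_one_sum[of ?A YW v, OF fA sv]
                at_one_sum[of ?A YW "sV a u + sV b v", OF fA suv]
      by (simp add: addW1 scW1 sum.distrib WS.scale_sum_right)
  qed
  have M2: "\<forall>u\<in>V0 sV Y one. \<forall>m0. Vector_Spaces.linear sW sW (at_one YW u m0)"
  proof (intro allI ballI)
    fix u m0 assume u: "u \<in> V0 sV Y one"
    obtain A where A: "finite A" "\<forall>m0 m w. m \<notin> A \<longrightarrow> YW u m0 m w = 0" using SW[OF u] by blast
    have e: "at_one YW u m0 = (\<lambda>w. \<Sum>m\<in>A. YW u m0 m w)"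
      by (rule ext, rule at_one_sum[of A YW u, OF A])
    show "Vector_Spaces.linear sW sW (at_one YW u m0)"
      unfolding e Vector_Spaces.linear_iff
      by (simp add: vsW addW2 scW2 sum.distrib WS.scale_sum_right)
  qed
  have M3: "\<forall>u\<in>V0 sV Y one. \<forall>w. \<exists>N. \<forall>m0\<ge>N. at_one YW u m0 w = 0"
  proof (intro allI ballI)
    fix u w
    obtain N where N: "\<forall>m0\<ge>N. \<forall>m. YW u m0 m w = 0" using truncW by blast
    show "\<exists>N. \<forall>m0\<ge>N. at_one YW u m0 w = 0" unfolding at_one_def
    proof (intro exI[of _ N] allI impI)
      fix m0 :: int assume "m0 \<ge> N"
      then have "(\<lambda>m. YW u m0 m w) = (\<lambda>m. 0)" using N by simp
      then show "fsum (\<lambda>m. YW u m0 m w) = 0" by simp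
    qed
  qed
  have M4: "\<forall>m0 w. at_one YW one m0 w = (if m0 = -1 then w else 0)"
  proof (intro allI)
    fix m0 w
    show "at_one YW one m0 w = (if m0 = -1 then w else 0)"
    proof (cases "m0 = -1")
      case True
      then show ?thesis unfolding at_one_def
        by (subst fsum_single[of 0]) (auto simp: vacW)
    next
      case False
      then show ?thesis unfolding at_one_def by (simp add: vacW)
    qed
  qed
  have M5: "va_jacobi (V0 sV Y one) sW (at_one YW) (at_one Y)"
    unfolding va_jacobi_def
  proof (intro allI ballI)
    fix u v n p q w assume u: "u \<in> V0 sV Y one" and v: "v \<in> V0 sV Y one"
    obtain A where A: "finite A" "\<forall>m0 m w. m \<notin> A \<longrightarrow> YW u m0 m w = 0"
        "\<forall>m0 m x. m \<notin> A \<longrightarrow> Y u m0 m x = 0" using SB[OF u] by blast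
    obtain B where B: "finite B" "\<forall>m0 m w. m \<notin> B \<longrightarrow> YW v m0 m w = 0" using SW[OF v] by blast
    show "fsum (\<lambda>k::nat. sW ((-1) ^ k * (of_int n gchoose k))
                          (at_one YW u (n + p - int k) (at_one YW v (q + int k) w)))
      - fsum (\<lambda>k::nat. sW ((-1) powi n * (-1) ^ k * (of_int n gchoose k))
                          (at_one YW v (n + q - int k) (at_one YW u (p + int k) w)))
      = fsum (\<lambda>k::nat. sW ((-1) ^ k * (of_int (int k - p - 1) gchoose k))
                          (at_one YW (at_one Y u (n + int k) v) (p + q - int k) w))"
      by (rule jac_sum[OF vsW lin1 lin2 jacW truncV truncW A B])
  qed
  have P4: "va_module sV (V0 sV Y one) (at_one Y) one sW (at_one YW)"
    unfolding va_module_def using vsW M1 M2 M3 M4 M5 by blast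
  have P5: "toroidal_irreducible sW YW \<longrightarrow> va_irreducible (V0 sV Y one) sW (at_one YW)"
  proof
    assume irr: "toroidal_irreducible sW YW"
    show "va_irreducible (V0 sV Y one) sW (at_one YW)"
      unfolding va_irreducible_def
    proof (intro conjI allI impI)
      show "\<exists>w::'w. w \<noteq> 0" using irr unfolding toroidal_irreducible_def by blast
    next
      fix U assume U: "module.subspace sW U \<and> (\<forall>u\<in>V0 sV Y one. \<forall>m0. at_one YW u m0 ` U \<subseteq> U)"
      have "\<forall>u m0 m. YW u m0 m ` U \<subseteq> U"
      proof (intro allI subsetI)
        fix v m0 m x assume "x \<in> YW v m0 m ` U"
        then obtain w where w: "w \<in> U" "x = YW v m0 m w" by blast
        have mem: "Y v (-1) m one \<in> V0 sV Y one"
          unfolding V0_def by (rule VS.span_base) blast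
        have "at_one YW (Y v (-1) m one) m0 w = YW (Y v (-1) m one) m0 m w"
          unfolding at_one_def by (rule fsum_single) (use P1W in auto)
        then have "x = at_one YW (Y v (-1) m one) m0 w" using w VI by simp
        then show "x \<in> U" using U mem w(1) by blast
      qed
      then show "U = {0} \<or> U = UNIV" using irr U unfolding toroidal_irreducible_def by blast
    qed
  qed
  show ?thesis using P1W P2 P3 P4 P5 by blast
qed

end
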